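(* Let $v$ and $g$ be independent real random variables, where $v\sim\mathrm{Rayleigh}(1)$ and $g\sim\mathrm{Normal}(0,1)$. Then for all $\alpha,\beta\in\mathbb R$, $$\mathbb P\big(\alpha v+\beta v^{-1}>g\big)=\begin{cases}1-\dfrac{\sqrt{\alpha^2+1}-\alpha}{2\sqrt{\alpha^2+1}}\,e^{-\beta\left(\alpha+\sqrt{\alpha^2+1}\right)}, & \beta\ge0,\\[2ex] \dfrac{\sqrt{\alpha^2+1}+\alpha}{2\sqrt{\alpha^2+1}}\,e^{\beta/\left(\alpha+\sqrt{\alpha^2+1}\right)}, & \beta<0.\end{cases}$$
   Context: $\mathrm{Rayleigh}(1)$ denotes the distribution on $(0,\infty)$ with density $v e^{-v^2/2}$. *)

theory Defs
  imports "HOL-Probability.Probability"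
begin

definition rayleigh_density :: "real \<Rightarrow> real" where
  "rayleigh_density v = (if v > 0 then v * exp (- v\<^sup>2 / 2) else 0)"

end

theory Submission
  imports Defs "HOL-Real_Asymp.Real_Asymp"
begin

definition Nd :: "real measure" where "Nd = density lborel std_normal_density"

definition Phi :: "real \<Rightarrow> real" where "Phi = cdf Nd"

lemma cont_phi[continuous_intros]: "continuous_on S std_normal_density"
  unfolding normal_density_def[abs_def] by (intro continuous_intros) auto

lemma isCont_phi[continuous_intros]: "isCont std_normal_density x"
  unfolding normal_density_def[abs_def] by (intro continuous_intros) auto

lemma real_distribution_Nd: "real_distribution Nd"
  unfolding real_distribution_def Nd_def real_distribution_axioms_def
  using prob_space_normal_density by simp

lemma emeasure_Nd: "A \<in> sets borel \<Longrightarrow> emeasure Nd A = (\<integral>\<^sup>+t. ennreal (std_normal_density t) * indicator A t \<partial>lborel)"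
  unfolding Nd_def by (simp add: emeasure_density)

lemma Nd_singleton: "emeasure Nd {x} = 0"
proof -
  have "emeasure Nd {x} = (\<integral>\<^sup>+t. ennreal (std_normal_density t) * indicator {x} t \<partial>lborel)"
    by (simp add: emeasure_Nd)
  also have "\<dots> = (\<integral>\<^sup>+(t::real). 0 \<partial>lborel)"
    using AE_lborel_singleton[of x] by (intro nn_integral_cong_AE) (auto elim!: eventually_mono)
  finally show ?thesis by simp
qed

lemma Phi_diff:
  assumes "a \<le> x"
  shows "Phi x = Phi a + integral {a..x} std_normal_density"
proof -
  interpret real_distribution Nd by (rule real_distribution_Nd)
  have sp: "space Nd = UNIV" "sets Nd = sets borel" by (auto simp: Nd_def)
  have "{..x} = {..<a} \<union> {a..x}" using assms by auto
  hence "measure Nd {..x} = measure Nd {..<a} + measure Nd {a..x}"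
    by (simp, subst finite_measure_Union) (auto simp: sp)
  moreover have "measure Nd {..a} = measure Nd {..<a} + measure Nd {a}"
    by (subst finite_measure_Union[symmetric]) (auto simp: sp intro!: arg_cong[where f="measure Nd"])
  moreover have "measure Nd {a} = 0" using Nd_singleton by (simp add: measure_def)
  moreover have "measure Nd {a..x} = integral {a..x} std_normal_density"
  proof -
    have hi: "(std_normal_density has_integral integral {a..x} std_normal_density) {a..x}"
      by (intro integrable_integral integrable_continuous_interval continuous_intros)
    have "emeasure Nd {a..x} = ennreal (integral {a..x} std_normal_density)"
      by (simp add: emeasure_Nd nn_integral_has_integral_lebesgue'[OF _ hi] normal_density_nonneg)
    moreover have "integral {a..x} std_normal_density \<ge> 0"
      by (intro integral_nonneg integrable_continuous_interval continuous_intros) (simp add: normal_density_nonneg)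
    ultimately show ?thesis by (simp add: measure_def)
  qed
  ultimately show ?thesis by (simp add: Phi_def cdf_def)
qed

lemma DERIV_Phi: "(Phi has_real_derivative std_normal_density t) (at t)"
proof -
  define a where "a = t - 1"
  define b where "b = t + 1"
  have "((\<lambda>x. integral {a..x} std_normal_density) has_real_derivative std_normal_density t) (at t within {a..b})"
    by (rule integral_has_real_derivative) (auto simp: a_def b_def intro: cont_phi)
  hence d: "((\<lambda>x. integral {a..x} std_normal_density) has_real_derivative std_normal_density t) (at t)"
    by (simp add: at_within_Icc_at a_def b_def)
  have "((\<lambda>x. Phi a + integral {a..x} std_normal_density) has_real_derivative std_normal_density t) (at t)"
    using DERIV_add[OF DERIV_const[of "Phi a"] d] by simp
  thus ?thesis
    by (rule has_field_derivative_transform_within_open[where S="{a<..<b}"])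
       (auto simp: a_def b_def intro!: Phi_diff[symmetric])
qed

lemma isCont_Phi[continuous_intros]: "isCont Phi x"
  using DERIV_Phi DERIV_isCont by blast

lemma Phi_top: "(Phi \<longlongrightarrow> 1) at_top"
proof -
  interpret real_distribution Nd by (rule real_distribution_Nd)
  show ?thesis unfolding Phi_def by (rule cdf_lim_at_top_prob)
qed

lemma Phi_bot: "(Phi \<longlongrightarrow> 0) at_bot"
proof -
  interpret real_distribution Nd by (rule real_distribution_Nd)
  show ?thesis unfolding Phi_def by (rule cdf_lim_at_bot)
qed

lemma Phi_sym: "Phi x + Phi (- x) = 1"
proof -
  have d: "\<forall>x. ((\<lambda>x. Phi x + Phi (- x)) has_real_derivative 0) (at x)"
  proof
    fix x
    have "((\<lambda>x. Phi x + Phi (- x)) has_real_derivative (std_normal_density x + std_normal_density (-x) * (-1))) (at x)"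
      by (rule DERIV_add[OF DERIV_Phi DERIV_chain2[OF DERIV_Phi DERIV_minus[OF DERIV_ident]]])
    thus "((\<lambda>x. Phi x + Phi (- x)) has_real_derivative 0) (at x)"
      by (simp add: normal_density_def)
  qed
  have c: "Phi y + Phi (- y) = Phi x + Phi (- x)" for y
    using DERIV_isconst_all[OF d] by blast
  have "((\<lambda>y. Phi y + Phi (- y)) \<longlongrightarrow> 1 + 0) at_top"
    by (intro tendsto_add Phi_top filterlim_compose[OF Phi_bot] filterlim_uminus_at_bot_at_top)
  moreover have "(\<lambda>y. Phi y + Phi (- y)) = (\<lambda>y. Phi x + Phi (- x))" by (rule ext, rule c)
  ultimately have "((\<lambda>y::real. Phi x + Phi (- x)) \<longlongrightarrow> 1) at_top" by (simp only: add_0_right)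
  thus ?thesis by (simp add: tendsto_const_iff)
qed

lemma Phi_0: "Phi 0 = 1/2"
  using Phi_sym[of 0] by simp


definition FF :: "real \<Rightarrow> real \<Rightarrow> real \<Rightarrow> real \<Rightarrow> real" where
  "FF a b s = (\<lambda>v. - (exp (- v\<^sup>2 / 2) * Phi (a * v + b / v))
     + (exp (- a * b - s * b) * ((a - s) / (2 * s))) * Phi (s * v - b / v)
     + (exp (- a * b + s * b) * ((a + s) / (2 * s))) * Phi (s * v + b / v))"

lemma key_identity:
  fixes a b s v :: real
  assumes s: "s > 0" "s\<^sup>2 = a\<^sup>2 + 1" and v: "v \<noteq> 0"
  shows "exp (- v\<^sup>2 / 2) * (std_normal_density (a * v + b / v) * (a - b / v\<^sup>2)) =
    (exp (- a * b - s * b) * ((a - s) / (2 * s))) * (std_normal_density (s * v - b / v) * (s + b / v\<^sup>2))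
  + (exp (- a * b + s * b) * ((a + s) / (2 * s))) * (std_normal_density (s * v + b / v) * (s - b / v\<^sup>2))"
proof -
  define E where "E = exp (- (s\<^sup>2 * v\<^sup>2 + b\<^sup>2 / v\<^sup>2) / 2 - a * b) / sqrt (2 * pi)"
  have h1: "exp (- v\<^sup>2 / 2) * std_normal_density (a * v + b / v) = E"
  proof -
    have "- v\<^sup>2 / 2 + - (a * v + b / v)\<^sup>2 / 2 = - (s\<^sup>2 * v\<^sup>2 + b\<^sup>2 / v\<^sup>2) / 2 - a * b"
      unfolding s(2) using v by (simp add: field_simps power2_eq_square)
    thus ?thesis unfolding E_def std_normal_density_def
      by (simp add: exp_add[symmetric])
  qed
  have h2: "exp (- a * b - s * b) * std_normal_density (s * v - b / v) = E"
  proof -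
    have "- a * b - s * b + - (s * v - b / v)\<^sup>2 / 2 = - (s\<^sup>2 * v\<^sup>2 + b\<^sup>2 / v\<^sup>2) / 2 - a * b"
      using v by (simp add: field_simps power2_eq_square)
    thus ?thesis unfolding E_def std_normal_density_def
      by (simp add: exp_add[symmetric])
  qed
  have h3: "exp (- a * b + s * b) * std_normal_density (s * v + b / v) = E"
  proof -
    have "- a * b + s * b + - (s * v + b / v)\<^sup>2 / 2 = - (s\<^sup>2 * v\<^sup>2 + b\<^sup>2 / v\<^sup>2) / 2 - a * b"
      using v by (simp add: field_simps power2_eq_square)
    thus ?thesis unfolding E_def std_normal_density_def
      by (simp add: exp_add[symmetric])
  qed
  have alg: "a - b / v\<^sup>2 = ((a - s) / (2 * s)) * (s + b / v\<^sup>2) + ((a + s) / (2 * s)) * (s - b / v\<^sup>2)"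
    using s v by (simp add: field_simps)
  have "exp (- v\<^sup>2 / 2) * (std_normal_density (a * v + b / v) * (a - b / v\<^sup>2)) = E * (a - b / v\<^sup>2)"
    using h1 by (metis mult.assoc)
  also have "\<dots> = (exp (- a * b - s * b) * std_normal_density (s * v - b / v)) * ((a - s) / (2 * s)) * (s + b / v\<^sup>2)
     + (exp (- a * b + s * b) * std_normal_density (s * v + b / v)) * ((a + s) / (2 * s)) * (s - b / v\<^sup>2)"
    unfolding h2 h3 by (subst alg) (simp add: algebra_simps)
  finally show ?thesis by (simp only: mult_ac)
qed

lemma DERIV_FF:
  fixes a b s v :: real
  assumes s: "s > 0" "s\<^sup>2 = a\<^sup>2 + 1" and v: "v > 0"
  shows "(FF a b s has_real_derivative rayleigh_density v * Phi (a * v + b / v)) (at v)"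
proof -
  have t1: "((\<lambda>v. exp (- v\<^sup>2 / 2)) has_real_derivative exp (- v\<^sup>2 / 2) * (- v)) (at v)"
    by (auto intro!: derivative_eq_intros)
  have t2: "((\<lambda>v. a * v + b / v) has_real_derivative a - b / v\<^sup>2) (at v)"
    using v by (auto intro!: derivative_eq_intros simp: power2_eq_square field_simps)
  have t3: "((\<lambda>v. s * v - b / v) has_real_derivative s + b / v\<^sup>2) (at v)"
    using v by (auto intro!: derivative_eq_intros simp: power2_eq_square field_simps)
  have t4: "((\<lambda>v. s * v + b / v) has_real_derivative s - b / v\<^sup>2) (at v)"
    using v by (auto intro!: derivative_eq_intros simp: power2_eq_square field_simps)
  note c2 = DERIV_chain2[OF DERIV_Phi t2]
  note c3 = DERIV_chain2[OF DERIV_Phi t3]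
  note c4 = DERIV_chain2[OF DERIV_Phi t4]
  note D = DERIV_add[OF DERIV_add[OF DERIV_minus[OF DERIV_mult[OF t1 c2]]
     DERIV_cmult[OF c3, of "exp (- a * b - s * b) * ((a - s) / (2 * s))"]]
     DERIV_cmult[OF c4, of "exp (- a * b + s * b) * ((a + s) / (2 * s))"]]
  show ?thesis unfolding FF_def
    apply (rule DERIV_cong[OF D])
    using key_identity[OF s, of v b] v
    by (simp add: rayleigh_density_def algebra_simps)
qed


lemma Phi_nonneg: "0 \<le> Phi x"
proof -
  interpret real_distribution Nd by (rule real_distribution_Nd)
  show ?thesis unfolding Phi_def by (rule cdf_nonneg)
qed

lemma Phi_le1: "Phi x \<le> 1"
proof -
  interpret real_distribution Nd by (rule real_distribution_Nd)
  show ?thesis unfolding Phi_def by (rule cdf_bounded_prob)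
qed

lemma FF_top:
  assumes s: "s > 0"
  shows "(FF a b s \<longlongrightarrow> exp (- a * b - s * b) * ((a - s) / (2 * s)) + exp (- a * b + s * b) * ((a + s) / (2 * s))) at_top"
proof -
  have e: "((\<lambda>v. exp (- v\<^sup>2 / 2) * Phi (a * v + b / v)) \<longlongrightarrow> 0) at_top"
  proof (rule tendsto_sandwich[where f="\<lambda>_. 0" and h="\<lambda>v. exp (- v\<^sup>2 / 2)"])
    show "\<forall>\<^sub>F v in at_top. 0 \<le> exp (- v\<^sup>2 / 2) * Phi (a * v + b / v)"
      by (intro always_eventually allI mult_nonneg_nonneg Phi_nonneg) auto
    show "\<forall>\<^sub>F v in at_top. exp (- v\<^sup>2 / 2) * Phi (a * v + b / v) \<le> exp (- v\<^sup>2 / 2)"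
      by (intro always_eventually allI mult_left_le Phi_le1) auto
    show "((\<lambda>v::real. exp (- v\<^sup>2 / 2)) \<longlongrightarrow> 0) at_top" by real_asymp
  qed simp
  have p1: "((\<lambda>v. Phi (s * v - b / v)) \<longlongrightarrow> 1) at_top"
    by (rule filterlim_compose[OF Phi_top]) (use s in real_asymp)
  have p2: "((\<lambda>v. Phi (s * v + b / v)) \<longlongrightarrow> 1) at_top"
    by (rule filterlim_compose[OF Phi_top]) (use s in real_asymp)
  have "(FF a b s \<longlongrightarrow> - 0 + exp (- a * b - s * b) * ((a - s) / (2 * s)) * 1 + exp (- a * b + s * b) * ((a + s) / (2 * s)) * 1) at_top"
    unfolding FF_def by (intro tendsto_intros e p1 p2)
  thus ?thesis by simp
qed

definition Lb :: "real \<Rightarrow> real \<Rightarrow> real \<Rightarrow> real" where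
  "Lb a b s = (if b > 0 then -1 + exp (- a * b + s * b) * ((a + s) / (2 * s))
     else if b < 0 then exp (- a * b - s * b) * ((a - s) / (2 * s))
     else -1/2 + (exp (- a * b - s * b) * ((a - s) / (2 * s)) + exp (- a * b + s * b) * ((a + s) / (2 * s))) / 2)"

lemma FF_bot:
  assumes s: "s > 0"
  shows "(FF a b s \<longlongrightarrow> Lb a b s) (at_right 0)"
proof -
  have e: "((\<lambda>v::real. exp (- v\<^sup>2 / 2)) \<longlongrightarrow> 1) (at_right 0)" by real_asymp
  consider "b > 0" | "b < 0" | "b = 0" by linarith
  then show ?thesis
  proof cases
    case 1
    have p0: "((\<lambda>v. Phi (a * v + b / v)) \<longlongrightarrow> 1) (at_right 0)"
      by (rule filterlim_compose[OF Phi_top]) (use 1 in real_asymp)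
    have p1: "((\<lambda>v. Phi (s * v - b / v)) \<longlongrightarrow> 0) (at_right 0)"
      by (rule filterlim_compose[OF Phi_bot]) (use 1 in real_asymp)
    have p2: "((\<lambda>v. Phi (s * v + b / v)) \<longlongrightarrow> 1) (at_right 0)"
      by (rule filterlim_compose[OF Phi_top]) (use 1 in real_asymp)
    have "(FF a b s \<longlongrightarrow> - (1 * 1) + exp (- a * b - s * b) * ((a - s) / (2 * s)) * 0 + exp (- a * b + s * b) * ((a + s) / (2 * s)) * 1) (at_right 0)"
      unfolding FF_def by (intro tendsto_intros e p0 p1 p2)
    thus ?thesis using 1 by (simp add: Lb_def)
  next
    case 2
    have p0: "((\<lambda>v. Phi (a * v + b / v)) \<longlongrightarrow> 0) (at_right 0)"
      by (rule filterlim_compose[OF Phi_bot]) (use 2 in real_asymp)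
    have p1: "((\<lambda>v. Phi (s * v - b / v)) \<longlongrightarrow> 1) (at_right 0)"
      by (rule filterlim_compose[OF Phi_top]) (use 2 in real_asymp)
    have p2: "((\<lambda>v. Phi (s * v + b / v)) \<longlongrightarrow> 0) (at_right 0)"
      by (rule filterlim_compose[OF Phi_bot]) (use 2 in real_asymp)
    have "(FF a b s \<longlongrightarrow> - (1 * 0) + exp (- a * b - s * b) * ((a - s) / (2 * s)) * 1 + exp (- a * b + s * b) * ((a + s) / (2 * s)) * 0) (at_right 0)"
      unfolding FF_def by (intro tendsto_intros e p0 p1 p2)
    thus ?thesis using 2 by (simp add: Lb_def)
  next
    case 3
    have q: "((\<lambda>v. c * v + b / v) \<longlongrightarrow> 0) (at_right 0)" for c
      using 3 by (simp, intro tendsto_eq_intros) auto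
    have q': "((\<lambda>v. c * v - b / v) \<longlongrightarrow> 0) (at_right 0)" for c
      using 3 by (simp, intro tendsto_eq_intros) auto
    note p0 = isCont_tendsto_compose[OF isCont_Phi q[of a]]
    note p1 = isCont_tendsto_compose[OF isCont_Phi q'[of s]]
    note p2 = isCont_tendsto_compose[OF isCont_Phi q[of s]]
    have "(FF a b s \<longlongrightarrow> - (1 * Phi 0) + exp (- a * b - s * b) * ((a - s) / (2 * s)) * Phi 0 + exp (- a * b + s * b) * ((a + s) / (2 * s)) * Phi 0) (at_right 0)"
      unfolding FF_def by (intro tendsto_intros e p0 p1 p2)
    moreover have "- (1 * Phi 0) + exp (- a * b - s * b) * ((a - s) / (2 * s)) * Phi 0 + exp (- a * b + s * b) * ((a + s) / (2 * s)) * Phi 0 = Lb a b s"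
      using 3 s by (simp add: Lb_def Phi_0 field_simps)
    ultimately show ?thesis by (simp only:)
  qed
qed


lemma borel_measurable_rayleigh[measurable]: "rayleigh_density \<in> borel_measurable borel"
  unfolding rayleigh_density_def[abs_def] by measurable

lemma rayleigh_nonneg: "0 \<le> rayleigh_density v"
  by (simp add: rayleigh_density_def)

lemma isCont_integrand:
  assumes "x > 0"
  shows "isCont (\<lambda>v. rayleigh_density v * Phi (a * v + b / v)) x"
proof -
  have "eventually (\<lambda>v. v \<in> {0<..}) (nhds x)"
    using assms by (intro eventually_nhds_in_open) auto
  hence ev: "eventually (\<lambda>v. rayleigh_density v * Phi (a * v + b / v) = v * exp (- v\<^sup>2 / 2) * Phi (a * v + b / v)) (nhds x)"
    by eventually_elim (simp add: rayleigh_density_def)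
  have "isCont (\<lambda>v. v * exp (- v\<^sup>2 / 2) * Phi (a * v + b / v)) x"
    using assms by (intro continuous_intros isCont_o2[OF _ isCont_Phi]) auto
  thus ?thesis using isCont_cong[OF ev] by simp
qed

lemma main_int:
  assumes s: "s > 0" "s\<^sup>2 = a\<^sup>2 + 1"
  shows "set_integrable lborel {0<..} (\<lambda>v. rayleigh_density v * Phi (a * v + b / v))"
    "(LBINT v:{0<..}. rayleigh_density v * Phi (a * v + b / v)) =
      exp (- a * b - s * b) * ((a - s) / (2 * s)) + exp (- a * b + s * b) * ((a + s) / (2 * s)) - Lb a b s"
proof -
  note r = interval_integral_FTC_nonneg[of 0 \<infinity> "FF a b s" "\<lambda>v. rayleigh_density v * Phi (a * v + b / v)"
     "Lb a b s" "exp (- a * b - s * b) * ((a - s) / (2 * s)) + exp (- a * b + s * b) * ((a + s) / (2 * s))"]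
  have c1: "DERIV (FF a b s) x :> rayleigh_density x * Phi (a * x + b / x)" if "0 < ereal x" for x
    using that by (intro DERIV_FF s) (simp add: zero_ereal_def)
  have c2: "isCont (\<lambda>v. rayleigh_density v * Phi (a * v + b / v)) x" if "0 < ereal x" for x
    using that by (intro isCont_integrand) (simp add: zero_ereal_def)
  have c3: "AE x in lborel. 0 < ereal x \<longrightarrow> ereal x < \<infinity> \<longrightarrow> 0 \<le> rayleigh_density x * Phi (a * x + b / x)"
    by (intro AE_I2 impI mult_nonneg_nonneg rayleigh_nonneg Phi_nonneg)
  have c4: "((FF a b s \<circ> real_of_ereal) \<longlongrightarrow> Lb a b s) (at_right 0)"
    unfolding zero_ereal_def ereal_tendsto_simps1 using FF_bot[OF s(1)] .
  have c5: "((FF a b s \<circ> real_of_ereal) \<longlongrightarrow> exp (- a * b - s * b) * ((a - s) / (2 * s)) + exp (- a * b + s * b) * ((a + s) / (2 * s))) (at_left \<infinity>)"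
    unfolding ereal_tendsto_simps1 using FF_top[OF s(1)] .
  note r' = r[OF _ c1 c2 c3 c4 c5, simplified]
  have ei: "einterval 0 \<infinity> = {0<..}" by (auto simp: einterval_def zero_ereal_def)
  show "set_integrable lborel {0<..} (\<lambda>v. rayleigh_density v * Phi (a * v + b / v))"
    using r'(1) by (simp add: ei)
  show "(LBINT v:{0<..}. rayleigh_density v * Phi (a * v + b / v)) =
      exp (- a * b - s * b) * ((a - s) / (2 * s)) + exp (- a * b + s * b) * ((a + s) / (2 * s)) - Lb a b s"
    using r'(2) by (simp add: interval_lebesgue_integral_def ei zero_ereal_def)
qed


lemma emeasure_Nd_lessThan: "emeasure Nd {..<c} = ennreal (Phi c)"
proof -
  interpret real_distribution Nd by (rule real_distribution_Nd)
  have sp: "sets Nd = sets borel" by (simp add: Nd_def)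
  have "measure Nd {..c} = measure Nd {..<c} + measure Nd {c}"
    by (subst finite_measure_Union[symmetric]) (auto simp: sp intro!: arg_cong[where f="measure Nd"])
  moreover have "measure Nd {c} = 0" using Nd_singleton by (simp add: measure_def)
  ultimately have "Phi c = measure Nd {..<c}" by (simp add: Phi_def cdf_def)
  thus ?thesis by (simp add: emeasure_eq_measure)
qed

lemma inner_integral:
  "(\<integral>\<^sup>+y. ennreal (std_normal_density y) * indicator {..<c} y \<partial>lborel) = ennreal (Phi c)"
  using emeasure_Nd_lessThan[of c] by (simp add: emeasure_Nd)

theorem lemma4:
  fixes M :: "'a measure" and V G :: "'a \<Rightarrow> real" and \<alpha> \<beta> :: real
  assumes "prob_space M"
    and "distributed M lborel V rayleigh_density"
    and "distributed M lborel G std_normal_density"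
    and "prob_space.indep_var M borel V borel G"
  shows "measure M {\<omega> \<in> space M. \<alpha> * V \<omega> + \<beta> / V \<omega> > G \<omega>} =
    (if \<beta> \<ge> 0 then
       1 - (sqrt (\<alpha>\<^sup>2 + 1) - \<alpha>) / (2 * sqrt (\<alpha>\<^sup>2 + 1)) * exp (- \<beta> * (\<alpha> + sqrt (\<alpha>\<^sup>2 + 1)))
     else
       (sqrt (\<alpha>\<^sup>2 + 1) + \<alpha>) / (2 * sqrt (\<alpha>\<^sup>2 + 1)) * exp (\<beta> / (\<alpha> + sqrt (\<alpha>\<^sup>2 + 1))))"
proof -
  interpret prob_space M by fact
  have eqd: "distr M borel V \<Otimes>\<^sub>M distr M borel G = distr M (borel \<Otimes>\<^sub>M borel) (\<lambda>x. (V x, G x))"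
    using assms(4) indep_var_distribution_eq by blast
  have eq2: "distr M lborel V \<Otimes>\<^sub>M distr M lborel G = distr M (lborel \<Otimes>\<^sub>M lborel) (\<lambda>x. (V x, G x))"
  proof -
    have "distr M lborel V = distr M borel V" by (rule distr_cong) auto
    moreover have "distr M lborel G = distr M borel G" by (rule distr_cong) auto
    moreover have "distr M (lborel \<Otimes>\<^sub>M lborel) (\<lambda>x. (V x, G x)) = distr M (borel \<Otimes>\<^sub>M borel) (\<lambda>x. (V x, G x))"
      by (rule distr_cong) (auto intro: sets_pair_measure_cong)
    ultimately show ?thesis using eqd by simp
  qed
  note J = distributed_joint_indep'[OF sigma_finite_lborel sigma_finite_lborel assms(2) assms(3) eq2]
  define A where "A = {p \<in> space (lborel \<Otimes>\<^sub>M lborel). snd p < \<alpha> * fst p + \<beta> / fst p}"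
  have Ameas: "A \<in> sets (lborel \<Otimes>\<^sub>M lborel)" unfolding A_def by measurable
  have "measure M {\<omega> \<in> space M. \<alpha> * V \<omega> + \<beta> / V \<omega> > G \<omega>} = measure M ((\<lambda>x. (V x, G x)) -` A \<inter> space M)"
    by (auto simp: A_def space_pair_measure intro!: arg_cong[where f="measure M"])
  also have "\<dots> = measure (distr M (lborel \<Otimes>\<^sub>M lborel) (\<lambda>x. (V x, G x))) A"
    by (rule measure_distr[symmetric]) (use J distributed_measurable Ameas in auto)
  also have "\<dots> = measure (density (lborel \<Otimes>\<^sub>M lborel) (\<lambda>(x, y). ennreal (rayleigh_density x) * ennreal (std_normal_density y))) A"
    using distributed_distr_eq_density[OF J] by simp
  also have "\<dots> = enn2real (\<integral>\<^sup>+p. ennreal (rayleigh_density (fst p)) * ennreal (std_normal_density (snd p)) * indicator A p \<partial>(lborel \<Otimes>\<^sub>M lborel))"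
    unfolding measure_def by (subst emeasure_density[OF _ Ameas], measurable) (auto simp: case_prod_beta)
  also have "(\<integral>\<^sup>+p. ennreal (rayleigh_density (fst p)) * ennreal (std_normal_density (snd p)) * indicator A p \<partial>(lborel \<Otimes>\<^sub>M lborel))
     = (\<integral>\<^sup>+x. \<integral>\<^sup>+y. ennreal (rayleigh_density x) * ennreal (std_normal_density y) * indicator A (x, y) \<partial>lborel \<partial>lborel)"
    by (rule lborel.nn_integral_fst[symmetric, where f="\<lambda>p. ennreal (rayleigh_density (fst p)) * ennreal (std_normal_density (snd p)) * indicator A p", simplified])
       (use Ameas in \<open>measurable\<close>)
  also have "\<dots> = (\<integral>\<^sup>+x. ennreal (rayleigh_density x * Phi (\<alpha> * x + \<beta> / x)) \<partial>lborel)"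
  proof (rule nn_integral_cong)
    fix x :: real
    have "(\<lambda>y. ennreal (rayleigh_density x) * ennreal (std_normal_density y) * indicator A (x, y)) =
      (\<lambda>y. ennreal (rayleigh_density x) * (ennreal (std_normal_density y) * indicator {..<\<alpha> * x + \<beta> / x} y))"
      by (auto simp: A_def space_pair_measure indicator_def)
    hence "(\<integral>\<^sup>+y. ennreal (rayleigh_density x) * ennreal (std_normal_density y) * indicator A (x, y) \<partial>lborel)
      = ennreal (rayleigh_density x) * (\<integral>\<^sup>+y. ennreal (std_normal_density y) * indicator {..<\<alpha> * x + \<beta> / x} y \<partial>lborel)"
      by (simp add: nn_integral_cmult)
    also have "\<dots> = ennreal (rayleigh_density x * Phi (\<alpha> * x + \<beta> / x))"
      by (simp add: inner_integral ennreal_mult rayleigh_nonneg Phi_nonneg)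
    finally show "(\<integral>\<^sup>+y. ennreal (rayleigh_density x) * ennreal (std_normal_density y) * indicator A (x, y) \<partial>lborel)
      = ennreal (rayleigh_density x * Phi (\<alpha> * x + \<beta> / x))" .
  qed
  finally have m: "measure M {\<omega> \<in> space M. \<alpha> * V \<omega> + \<beta> / V \<omega> > G \<omega>} =
     enn2real (\<integral>\<^sup>+x. ennreal (rayleigh_density x * Phi (\<alpha> * x + \<beta> / x)) \<partial>lborel)" .
  define s where "s = sqrt (\<alpha>\<^sup>2 + 1)"
  have s: "s > 0" "s\<^sup>2 = \<alpha>\<^sup>2 + 1" unfolding s_def by (auto intro: add_nonneg_pos)
  let ?g = "\<lambda>v. rayleigh_density v * Phi (\<alpha> * v + \<beta> / v)"
  have geq: "?g = (\<lambda>v. indicator {0<..} v *\<^sub>R ?g v)"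
    by (auto simp: rayleigh_density_def indicator_def)
  have int: "integrable lborel ?g"
    using main_int(1)[OF s, of \<beta>] unfolding set_integrable_def by (subst geq)
  have "(\<integral>\<^sup>+x. ennreal (?g x) \<partial>lborel) = ennreal (integral\<^sup>L lborel ?g)"
    by (rule nn_integral_eq_integral[OF int]) (auto intro: mult_nonneg_nonneg rayleigh_nonneg Phi_nonneg)
  moreover have "integral\<^sup>L lborel ?g = (LBINT v:{0<..}. ?g v)"
    unfolding set_lebesgue_integral_def by (subst geq) simp
  moreover have "integral\<^sup>L lborel ?g \<ge> 0"
    by (rule Bochner_Integration.integral_nonneg) (intro mult_nonneg_nonneg rayleigh_nonneg Phi_nonneg)
  ultimately have m2: "measure M {\<omega> \<in> space M. \<alpha> * V \<omega> + \<beta> / V \<omega> > G \<omega>} = (LBINT v:{0<..}. ?g v)"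
    using m by simp
  note mi = main_int(2)[OF s, of \<beta>]
  have "sqrt (\<alpha>\<^sup>2) < s" unfolding s_def by (subst real_sqrt_less_iff) simp
  hence as: "\<bar>\<alpha>\<bar> < s" by simp
  have t: "sqrt (\<alpha>\<^sup>2 + 1) = s" by (simp add: s_def)
  consider "\<beta> > 0" | "\<beta> = 0" | "\<beta> < 0" by linarith
  thus ?thesis
  proof cases
    case 1
    have e: "exp (- \<alpha> * \<beta> - s * \<beta>) = exp (- \<beta> * (\<alpha> + s))" by (simp add: algebra_simps)
    show ?thesis unfolding t m2 mi using 1 s(1) by (simp add: Lb_def e field_simps)
  next
    case 2
    show ?thesis unfolding t m2 mi using 2 s(1) by (simp add: Lb_def field_simps)
  next
    case 3
    have ne: "\<alpha> + s \<noteq> 0" using as by linarith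
    have "\<beta> / (\<alpha> + s) = \<beta> * (s - \<alpha>)"
      using ne s(2) by (simp add: field_simps power2_eq_square)
    hence e: "exp (- \<alpha> * \<beta> + s * \<beta>) = exp (\<beta> / (\<alpha> + s))" by (simp add: algebra_simps)
    show ?thesis unfolding t m2 mi Lb_def using 3 s(1) by (simp add: e[symmetric] field_simps)
  qed
qed

end
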